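(* Let $N$ be a positive integer, $L>0$, and $\zeta=(\zeta_0,\dots,\zeta_{N+2})\in\mathbb{R}^{N+3}$ with $\zeta_0>\zeta_1>\dots>\zeta_{N+1}>\zeta_{N+2}=0$. With $x_i,g_i,f_i$ and $W^\zeta$ as defined in the context, the function $W^\zeta:\mathbb{R}^{N+1}\to\mathbb{R}$ is convex and has a Lipschitz-continuous gradient with constant $L$, and $W^\zeta(x_i)=f_i$, $\nabla W^\zeta(x_i)=g_i$ for all $i\in\{0,\dots,N+1\}$.
   Context: Let $e_0,\dots,e_N$ denote the standard unit vectors of $\mathbb{R}^{N+1}$ (zero-based indexing). Define for $i=0,\dots,N+1$: $x_i=-\sum_{j=0}^{i-1}\frac{\zeta_j-\zeta_{i+1}}{\sqrt{\zeta_j-\zeta_{j+1}}}e_j\in\mathbb{R}^{N+1}$; $g_i=L\sqrt{\zeta_i-\zeta_{i+1}}\,e_i$ for $i=0,\dots,N$ and $g_{N+1}=0$; $f_i=\frac L2(\zeta_i+\zeta_{i+1})$ for $i=0,\dots,N$ and $f_{N+1}=0$. For $y\in\mathbb{R}^{N+1}$, $\nu\in\mathbb{R}^{N+1}$, $\alpha=(\alpha_0,\dots,\alpha_{N+1})\in\mathbb{R}^{N+2}$ let $w^\zeta(y,\nu,\alpha)=\frac L2\|y+\nu-\sum_{i=0}^{N+1}\alpha_i(x_i-\frac1Lg_i)\|^2+\sum_{i=0}^{N+1}\alpha_i(f_i-\frac1{2L}\|g_i\|^2)$, and $W^\zeta(y)=\min\{w^\zeta(y,\nu,\alpha):\nu\in\mathbb{R}^{N+1}_+,\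 \alpha\in\Delta_{N+2}\}$, where $\mathbb{R}^{N+1}_+$ is the nonnegative orthant and $\Delta_{N+2}=\{\alpha\in\mathbb{R}^{N+2}:\alpha_i\geq0,\ \sum_i\alpha_i=1\}$. *)

theory Defs
  imports "HOL-Analysis.Analysis"
begin

text \<open>R^{N+1} is rendered as real^'n, where enum is a bijection from {0..N}
  onto the index type 'n; e_j is the standard unit vector at index enum j.\<close>

definition uvec :: "(nat \<Rightarrow> 'n::finite) \<Rightarrow> nat \<Rightarrow> real^'n" where
  "uvec enum j = axis (enum j) 1"

definition xpt :: "(nat \<Rightarrow> real) \<Rightarrow> (nat \<Rightarrow> 'n::finite) \<Rightarrow> nat \<Rightarrow> real^'n" where
  "xpt \<zeta> enum i = - (\<Sum>j<i. ((\<zeta> j - \<zeta> (i+1)) / sqrt (\<zeta> j - \<zeta> (j+1))) *\<^sub>R uvec enum j)"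

definition gpt :: "nat \<Rightarrow> real \<Rightarrow> (nat \<Rightarrow> real) \<Rightarrow> (nat \<Rightarrow> 'n::finite) \<Rightarrow> nat \<Rightarrow> real^'n" where
  "gpt N L \<zeta> enum i = (if i \<le> N then (L * sqrt (\<zeta> i - \<zeta> (i+1))) *\<^sub>R uvec enum i else 0)"

definition fval :: "nat \<Rightarrow> real \<Rightarrow> (nat \<Rightarrow> real) \<Rightarrow> nat \<Rightarrow> real" where
  "fval N L \<zeta> i = (if i \<le> N then L / 2 * (\<zeta> i + \<zeta> (i+1)) else 0)"

definition wfun :: "nat \<Rightarrow> real \<Rightarrow> (nat \<Rightarrow> real) \<Rightarrow> (nat \<Rightarrow> 'n::finite)
    \<Rightarrow> real^'n \<Rightarrow> real^'n \<Rightarrow> (nat \<Rightarrow> real) \<Rightarrow> real" where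
  "wfun N L \<zeta> enum y \<nu> \<alpha> =
     L / 2 * (norm (y + \<nu> - (\<Sum>i\<le>N+1. \<alpha> i *\<^sub>R (xpt \<zeta> enum i - (1/L) *\<^sub>R gpt N L \<zeta> enum i))))^2
     + (\<Sum>i\<le>N+1. \<alpha> i * (fval N L \<zeta> i - 1/(2*L) * (norm (gpt N L \<zeta> enum i))^2))"

text \<open>W^zeta(y): minimum (rendered as infimum) over nu in the nonnegative orthant
  and alpha in the simplex Delta_{N+2} (alpha indexed by 0..N+1).\<close>
definition Wfun :: "nat \<Rightarrow> real \<Rightarrow> (nat \<Rightarrow> real) \<Rightarrow> (nat \<Rightarrow> 'n::finite) \<Rightarrow> real^'n \<Rightarrow> real" where
  "Wfun N L \<zeta> enum y = Inf {wfun N L \<zeta> enum y \<nu> \<alpha> | \<nu> \<alpha>.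
      (\<forall>k. 0 \<le> \<nu> $ k) \<and> (\<forall>i\<le>N+1. 0 \<le> \<alpha> i) \<and> (\<Sum>i\<le>N+1. \<alpha> i) = 1}"

end

theory Submission imports Defs begin

definition wa :: "real \<Rightarrow> ('p \<Rightarrow> 'v::real_inner) \<Rightarrow> ('p \<Rightarrow> real) \<Rightarrow> 'v \<Rightarrow> 'p \<Rightarrow> real" where
  "wa L Mf bf y p = L/2 * (norm (y - Mf p))^2 + bf p"

lemma norm_sq_expand:
  fixes a b :: "'v::real_inner"
  shows "(norm (a + b))^2 = (norm a)^2 + 2 * (a \<bullet> b) + (norm b)^2"
  by (simp add: power2_norm_eq_inner inner_add_left inner_add_right inner_commute)

lemma small_quad:
  fixes A B :: real
  assumes "B \<ge> 0" "\<And>t. 0 < t \<Longrightarrow> t \<le> 1 \<Longrightarrow> t * A + t^2 * B \<ge> 0"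
  shows "A \<ge> 0"
proof (rule ccontr)
  assume "\<not> A \<ge> 0"
  hence A: "A < 0" by simp
  define t where "t = min 1 ((-A)/(2*B+1))"
  have t0: "t > 0" using A assms(1) by (auto simp: t_def intro!: divide_neg_pos)
  have t1: "t \<le> 1" by (simp add: t_def)
  have "t \<le> (-A)/(2*B+1)" by (simp add: t_def)
  hence "t * B \<le> (-A)/(2*B+1) * B" using assms(1) by (rule mult_right_mono)
  also have "\<dots> < -A"
  proof -
    have "(-A)/(2*B+1) * B = (-A) * (B/(2*B+1))" by simp
    also have "\<dots> < (-A) * 1" using A assms(1) by (intro mult_strict_left_mono) (auto simp: divide_less_eq)
    finally show ?thesis by simp
  qed
  finally have "A + t * B < 0" by simp
  hence "t * (A + t*B) < 0" using t0 by (simp add: mult_pos_neg)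
  moreover have "t * (A + t*B) = t * A + t^2 * B" by (simp add: algebra_simps power2_eq_square)
  ultimately show False using assms(2)[OF t0 t1] by simp
qed

lemma vi_of_min:
  fixes Mf :: "'p \<Rightarrow> 'v::real_inner"
  assumes L: "L > 0"
    and conv: "\<And>p q t. p \<in> P \<Longrightarrow> q \<in> P \<Longrightarrow> 0 \<le> t \<Longrightarrow> t \<le> 1 \<Longrightarrow>
        \<exists>s\<in>P. Mf s = (1-t) *\<^sub>R Mf p + t *\<^sub>R Mf q \<and> bf s = (1-t) * bf p + t * bf q"
    and p: "p \<in> P" and minp: "\<And>q. q \<in> P \<Longrightarrow> wa L Mf bf y p \<le> wa L Mf bf y q"
    and q: "q \<in> P"
  shows "L * ((y - Mf p) \<bullet> (Mf q - Mf p)) \<le> bf q - bf p"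
proof -
  define r where "r = y - Mf p"
  define d where "d = Mf q - Mf p"
  define A where "A = bf q - bf p - L * (r \<bullet> d)"
  define B where "B = L/2 * (norm d)^2"
  have "B \<ge> 0" using L by (simp add: B_def)
  moreover have "t * A + t^2 * B \<ge> 0" if t: "0 < t" "t \<le> 1" for t
  proof -
    obtain s where s: "s \<in> P" "Mf s = (1-t) *\<^sub>R Mf p + t *\<^sub>R Mf q" "bf s = (1-t) * bf p + t * bf q"
      using conv[OF p q, of t] t by auto
    have "y - Mf s = r + (- t *\<^sub>R d)" by (simp add: s r_def d_def algebra_simps)
    hence "(norm (y - Mf s))^2 = (norm r)^2 - 2 * t * (r \<bullet> d) + t^2 * (norm d)^2"
      by (simp only: norm_sq_expand) (simp add: power_mult_distrib)
    hence ns': "wa L Mf bf y s = L/2*((norm r)^2 - 2*t*(r \<bullet> d) + t^2*(norm d)^2) + ((1-t)*bf p + t*bf q)"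
      by (simp only: wa_def s(3))
    have wp: "wa L Mf bf y p = L/2 * (norm r)^2 + bf p" by (simp add: wa_def r_def)
    have "wa L Mf bf y s = wa L Mf bf y p + t * A + t^2 * B"
      unfolding ns' wp A_def B_def by (simp add: algebra_simps)
    with minp[OF s(1)] show ?thesis by simp
  qed
  ultimately have "A \<ge> 0" by (rule small_quad)
  thus ?thesis by (simp add: A_def r_def d_def)
qed

lemma lower_from_vi:
  fixes Mf :: "'p \<Rightarrow> 'v::real_inner"
  assumes vi: "\<And>q. q \<in> P \<Longrightarrow> L * ((y - Mf p) \<bullet> (Mf q - Mf p)) \<le> bf q - bf p"
    and L: "L > 0" and q: "q \<in> P"
  shows "wa L Mf bf y' q \<ge> wa L Mf bf y p + L * ((y - Mf p) \<bullet> (y' - y))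
           + L/2 * (norm ((y' - Mf q) - (y - Mf p)))^2"
proof -
  define r where "r = y - Mf p"
  define D where "D = (y' - Mf q) - r"
  have e: "y' - Mf q = r + D" by (simp add: D_def)
  have D': "D = (y' - y) - (Mf q - Mf p)" by (simp add: D_def r_def)
  have rD: "r \<bullet> D = r \<bullet> (y' - y) - r \<bullet> (Mf q - Mf p)"
    unfolding D' by (simp add: inner_diff_right)
  have wp: "wa L Mf bf y p = L/2 * (norm r)^2 + bf p" by (simp add: wa_def r_def)
  have "wa L Mf bf y' q = L/2 * (norm r)^2 + L * (r \<bullet> D) + L/2 * (norm D)^2 + bf q"
    unfolding wa_def e norm_sq_expand by (simp add: algebra_simps)
  also have "\<dots> = wa L Mf bf y p + L * (r \<bullet> (y' - y)) + L/2 * (norm D)^2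
       + (bf q - bf p - L * (r \<bullet> (Mf q - Mf p)))"
    unfolding wp rD by (simp add: algebra_simps)
  finally show ?thesis using vi[OF q] by (simp add: r_def D_def)
qed

lemma abstract_main:
  fixes Mf :: "'p \<Rightarrow> 'v::real_inner" and W :: "'v \<Rightarrow> real"
  assumes L: "L > 0"
    and conv: "\<And>p q t. p \<in> P \<Longrightarrow> q \<in> P \<Longrightarrow> 0 \<le> t \<Longrightarrow> t \<le> 1 \<Longrightarrow>
        \<exists>s\<in>P. Mf s = (1-t) *\<^sub>R Mf p + t *\<^sub>R Mf q \<and> bf s = (1-t) * bf p + t * bf q"
    and attain: "\<And>y. \<exists>p\<in>P. \<forall>q\<in>P. wa L Mf bf y p \<le> wa L Mf bf y q"
    and Wdef: "\<And>y. W y = Inf ((\<lambda>p. wa L Mf bf y p) ` P)"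
  shows "convex_on UNIV W \<and> (\<exists>G.
         (\<forall>y. GDERIV W y :> G y) \<and> L-lipschitz_on UNIV G
       \<and> (\<forall>y p. p \<in> P \<and> (\<forall>q\<in>P. L * ((y - Mf p) \<bullet> (Mf q - Mf p)) \<le> bf q - bf p)
             \<longrightarrow> W y = wa L Mf bf y p \<and> G y = L *\<^sub>R (y - Mf p)))"
proof -
  obtain ps where ps: "\<And>y. ps y \<in> P" "\<And>y q. q \<in> P \<Longrightarrow> wa L Mf bf y (ps y) \<le> wa L Mf bf y q"
    using attain by metis
  have Weq: "W y = wa L Mf bf y (ps y)" for y
    unfolding Wdef by (rule cInf_eq_minimum) (use ps in auto)
  have Wle: "W y \<le> wa L Mf bf y q" if "q \<in> P" for y q
    using Weq ps(2)[OF that] by simp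
  have vi: "L * ((y - Mf (ps y)) \<bullet> (Mf q - Mf (ps y))) \<le> bf q - bf (ps y)" if "q \<in> P" for y q
    by (rule vi_of_min[OF L conv ps(1) ps(2) that]) auto
  define G where "G y = L *\<^sub>R (y - Mf (ps y))" for y
  have Lo: "W y' \<ge> W y + G y \<bullet> (y' - y) + 1/(2*L) * (norm (G y' - G y))^2" for y y'
  proof -
    have "W y' \<ge> W y + L * ((y - Mf (ps y)) \<bullet> (y' - y))
           + L/2 * (norm ((y' - Mf (ps y')) - (y - Mf (ps y))))^2"
      using lower_from_vi[where P=P and L=L and y=y and Mf=Mf and p="ps y" and bf=bf and q="ps y'" and y'=y', OF vi L ps(1)] Weq by simp
    moreover have "G y' - G y = L *\<^sub>R ((y' - Mf (ps y')) - (y - Mf (ps y)))"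
      by (simp add: G_def algebra_simps)
    ultimately show ?thesis using L
      by (simp add: G_def power_mult_distrib power2_eq_square mult_ac)
  qed
  have Up: "W y' \<le> W y + G y \<bullet> (y' - y) + L/2 * (norm (y' - y))^2" for y y'
  proof -
    have "W y' \<le> wa L Mf bf y' (ps y)" by (rule Wle[OF ps(1)])
    also have "y' - Mf (ps y) = (y - Mf (ps y)) + (y' - y)" by simp
    hence "wa L Mf bf y' (ps y) = W y + G y \<bullet> (y' - y) + L/2 * (norm (y' - y))^2"
      unfolding Weq wa_def G_def by (simp only: norm_sq_expand) (simp add: algebra_simps)
    finally show ?thesis .
  qed
  have supp: "W y' \<ge> W y + G y \<bullet> (y' - y)" for y y'
    using Lo[of y y'] L by (smt (verit) divide_nonneg_nonneg zero_le_power2 mult_nonneg_nonneg)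
  have cvx: "convex_on UNIV W"
  proof (rule convex_onI)
    fix t :: real and x y :: 'v assume t: "0 < t" "t < 1"
    define z where "z = (1 - t) *\<^sub>R x + t *\<^sub>R y"
    have "(1-t) * (G z \<bullet> (x - z)) + t * (G z \<bullet> (y - z)) = G z \<bullet> ((1-t) *\<^sub>R (x - z) + t *\<^sub>R (y - z))"
      by (simp add: inner_add_right)
    also have "(1-t) *\<^sub>R (x - z) + t *\<^sub>R (y - z) = 0"
      by (simp add: z_def algebra_simps)
    finally have 0: "(1-t) * (G z \<bullet> (x - z)) + t * (G z \<bullet> (y - z)) = 0" by simp
    have "(1-t) * W x \<ge> (1-t) * (W z + G z \<bullet> (x - z))" using supp[of z x] t by (intro mult_left_mono) auto
    moreover have "t * W y \<ge> t * (W z + G z \<bullet> (y - z))" using supp[of z y] t by (intro mult_left_mono) auto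
    ultimately show "W ((1 - t) *\<^sub>R x + t *\<^sub>R y) \<le> (1 - t) * W x + t * W y"
      using 0 unfolding z_def[symmetric] by (simp add: algebra_simps)
  qed auto
  have der: "GDERIV W y :> G y" for y
    unfolding gderiv_def has_derivative_at_alt
  proof (intro conjI allI impI)
    show "bounded_linear (\<lambda>h. h \<bullet> G y)" by (rule bounded_linear_inner_left)
    fix e :: real assume e: "e > 0"
    show "\<exists>d>0. \<forall>y'. norm (y' - y) < d \<longrightarrow> norm (W y' - W y - (y' - y) \<bullet> G y) \<le> e * norm (y' - y)"
    proof (intro exI[of _ "2*e/L"] conjI allI impI)
      show "2*e/L > 0" using e L by simp
      fix y' assume d: "norm (y' - y) < 2*e/L"
      have a: "0 \<le> W y' - W y - (y' - y) \<bullet> G y" using supp[of y y'] by (simp add: inner_commute)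
      have b: "W y' - W y - (y' - y) \<bullet> G y \<le> L/2 * (norm (y' - y))^2" using Up[of y' y] by (simp add: inner_commute)
      have "L/2 * (norm (y' - y))^2 = (L/2 * norm (y' - y)) * norm (y' - y)" by (simp add: power2_eq_square)
      also have "\<dots> \<le> e * norm (y' - y)"
        using d L by (intro mult_right_mono) (auto simp: field_simps)
      finally show "norm (W y' - W y - (y' - y) \<bullet> G y) \<le> e * norm (y' - y)" using a b by simp
    qed
  qed
  have lip: "L-lipschitz_on UNIV G"
  proof (rule lipschitz_onI)
    fix x y :: 'v
    define D where "D = G x - G y"
    have "W x \<ge> W y + G y \<bullet> (x - y) + 1/(2*L) * (norm D)^2" using Lo[of y x] by (simp add: D_def)
    moreover have "W y \<ge> W x + G x \<bullet> (y - x) + 1/(2*L) * (norm D)^2"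
      using Lo[of x y] by (simp add: D_def norm_minus_commute)
    ultimately have "1/L * (norm D)^2 \<le> (G x - G y) \<bullet> (x - y)"
      by (simp add: inner_diff_left inner_diff_right inner_commute field_simps)
    also have "\<dots> \<le> norm D * norm (x - y)" unfolding D_def by (rule norm_cauchy_schwarz)
    finally have h: "(norm D)^2 \<le> L * (norm D * norm (x - y))" using L by (simp add: field_simps)
    show "dist (G x) (G y) \<le> L * dist x y"
    proof (cases "norm D = 0")
      case True thus ?thesis using L by (simp add: D_def dist_norm)
    next
      case False
      hence "norm D > 0" by simp
      with h have "norm D \<le> L * norm (x - y)" by (simp add: power2_eq_square algebra_simps)
      thus ?thesis by (simp add: D_def dist_norm)
    qed
  qed (use L in simp)
  have interp: "W y = wa L Mf bf y p \<and> G y = L *\<^sub>R (y - Mf p)"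
    if p: "p \<in> P" and vp: "\<forall>q\<in>P. L * ((y - Mf p) \<bullet> (Mf q - Mf p)) \<le> bf q - bf p" for y p
  proof -
    have lo: "wa L Mf bf y q \<ge> wa L Mf bf y p + L/2 * (norm ((y - Mf q) - (y - Mf p)))^2" if "q \<in> P" for q
      using lower_from_vi[where P=P and L=L and y=y and Mf=Mf and p=p and bf=bf and q=q and y'=y, OF _ L that] vp by simp
    have Wp: "W y = wa L Mf bf y p"
      unfolding Wdef
    proof (rule cInf_eq_minimum)
      show "wa L Mf bf y p \<in> (\<lambda>p. wa L Mf bf y p) ` P" using p by simp
      fix x assume "x \<in> (\<lambda>p. wa L Mf bf y p) ` P"
      then obtain q where "q \<in> P" "x = wa L Mf bf y q" by auto
      thus "wa L Mf bf y p \<le> x" using lo[of q] L by (smt (verit) divide_nonneg_nonneg zero_le_power2 mult_nonneg_nonneg)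
    qed
    have "wa L Mf bf y p + L/2 * (norm ((y - Mf (ps y)) - (y - Mf p)))^2 \<le> wa L Mf bf y p"
      using lo[OF ps(1)[of y]] Weq[of y] Wp by simp
    hence "(norm ((y - Mf (ps y)) - (y - Mf p)))^2 \<le> 0" using L
      by (smt (verit) divide_pos_pos mult_pos_pos zero_le_power2 mult_le_0_iff)
    hence "y - Mf (ps y) = y - Mf p" by simp
    thus ?thesis using Wp by (simp add: G_def)
  qed
  show ?thesis using cvx der lip interp by blast
qed


definition zp where "zp N L \<zeta> enum i = xpt \<zeta> enum i - (1/L) *\<^sub>R gpt N L \<zeta> enum i"
definition bp where "bp N L \<zeta> enum i = fval N L \<zeta> i - 1/(2*L) * (norm (gpt N L \<zeta> enum i))^2"
definition PP :: "nat \<Rightarrow> ((real^'n) \<times> (nat \<Rightarrow> real)) set" where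
  "PP N = {(\<nu>, \<alpha>). (\<forall>k. 0 \<le> \<nu> $ k) \<and> (\<forall>i\<le>N+1. 0 \<le> \<alpha> i) \<and> sum \<alpha> {..N+1} = 1}"
definition MM :: "nat \<Rightarrow> real \<Rightarrow> (nat \<Rightarrow> real) \<Rightarrow> (nat \<Rightarrow> 'n::finite) \<Rightarrow> (real^'n) \<times> (nat \<Rightarrow> real) \<Rightarrow> real^'n" where
  "MM N L \<zeta> enum p = (\<Sum>i\<le>N+1. snd p i *\<^sub>R zp N L \<zeta> enum i) - fst p"
definition BB :: "nat \<Rightarrow> real \<Rightarrow> (nat \<Rightarrow> real) \<Rightarrow> (nat \<Rightarrow> 'n::finite) \<Rightarrow> (real^'n) \<times> (nat \<Rightarrow> real) \<Rightarrow> real" where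
  "BB N L \<zeta> enum p = (\<Sum>i\<le>N+1. snd p i * bp N L \<zeta> enum i)"

lemma wfun_wa: "wfun N L \<zeta> enum y \<nu> \<alpha> = wa L (MM N L \<zeta> enum) (BB N L \<zeta> enum) y (\<nu>, \<alpha>)"
  unfolding wfun_def wa_def MM_def BB_def zp_def bp_def
  by (simp add: algebra_simps)

lemma Wfun_eq: "Wfun N L \<zeta> enum y = Inf ((\<lambda>p. wa L (MM N L \<zeta> enum) (BB N L \<zeta> enum) y p) ` PP N)"
  unfolding Wfun_def wfun_wa PP_def
  by (rule arg_cong[where f=Inf]) (auto simp: image_iff)

lemma conv_PP:
  assumes "p \<in> PP N" "q \<in> PP N" "0 \<le> t" "t \<le> 1"
  shows "\<exists>s\<in>PP N. MM N L \<zeta> enum s = (1-t) *\<^sub>R MM N L \<zeta> enum p + t *\<^sub>R MM N L \<zeta> enum q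
           \<and> BB N L \<zeta> enum s = (1-t) * BB N L \<zeta> enum p + t * BB N L \<zeta> enum q"
proof -
  obtain \<nu> \<alpha> \<nu>' \<alpha>' where pq: "p = (\<nu>, \<alpha>)" "q = (\<nu>', \<alpha>')" by (cases p, cases q) auto
  define s where "s = ((1-t) *\<^sub>R \<nu> + t *\<^sub>R \<nu>', \<lambda>i. (1-t) * \<alpha> i + t * \<alpha>' i)"
  have "sum (\<lambda>i. (1-t) * \<alpha> i + t * \<alpha>' i) {..N+1} = (1-t) * sum \<alpha> {..N+1} + t * sum \<alpha>' {..N+1}"
    by (simp only: sum.distrib sum_distrib_left)
  hence "s \<in> PP N" using assms unfolding s_def pq PP_def
    by (auto simp del: sum.atMost_Suc intro!: add_nonneg_nonneg mult_nonneg_nonneg)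
  moreover have "MM N L \<zeta> enum s = (1-t) *\<^sub>R MM N L \<zeta> enum p + t *\<^sub>R MM N L \<zeta> enum q"
  proof -
    have "(\<Sum>i\<le>N+1. ((1-t) * \<alpha> i + t * \<alpha>' i) *\<^sub>R zp N L \<zeta> enum i)
      = (1-t) *\<^sub>R (\<Sum>i\<le>N+1. \<alpha> i *\<^sub>R zp N L \<zeta> enum i) + t *\<^sub>R (\<Sum>i\<le>N+1. \<alpha>' i *\<^sub>R zp N L \<zeta> enum i)"
      by (simp only: scaleR_add_left sum.distrib scaleR_sum_right scaleR_scaleR)
    thus ?thesis unfolding s_def pq MM_def by (simp add: algebra_simps)
  qed
  moreover have "BB N L \<zeta> enum s = (1-t) * BB N L \<zeta> enum p + t * BB N L \<zeta> enum q"
  proof -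
    have "(\<Sum>i\<le>N+1. ((1-t) * \<alpha> i + t * \<alpha>' i) * bp N L \<zeta> enum i)
      = (1-t) * (\<Sum>i\<le>N+1. \<alpha> i * bp N L \<zeta> enum i) + t * (\<Sum>i\<le>N+1. \<alpha>' i * bp N L \<zeta> enum i)"
      by (simp only: distrib_right sum.distrib sum_distrib_left mult.assoc)
    thus ?thesis unfolding s_def pq BB_def by simp
  qed
  ultimately show ?thesis by blast
qed

context
  fixes N :: nat and L :: real and \<zeta> :: "nat \<Rightarrow> real" and enum :: "nat \<Rightarrow> 'n::finite"
  assumes L: "L > 0"
    and bij: "bij_betw enum {..N} (UNIV :: 'n set)"
    and mono: "\<forall>i\<le>N+1. \<zeta> (i+1) < \<zeta> i" and z0: "\<zeta> (N+2) = 0"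
begin

lemma inj: "inj_on enum {..N}" using bij by (simp add: bij_betw_def)

lemma anti_aux: "a + k \<le> N+2 \<Longrightarrow> \<zeta> (a+k) \<le> \<zeta> a"
proof (induction k)
  case 0 thus ?case by simp
next
  case (Suc k)
  have "\<zeta> (a + k + 1) < \<zeta> (a+k)" using mono Suc.prems by auto
  thus ?case using Suc by simp
qed

lemma anti: "a \<le> b \<Longrightarrow> b \<le> N+2 \<Longrightarrow> \<zeta> b \<le> \<zeta> a"
  using anti_aux[of a "b - a"] by simp

lemma spos: "i \<le> N+1 \<Longrightarrow> \<zeta> i - \<zeta> (i+1) > 0" using mono by auto

lemma uu: "i \<le> N \<Longrightarrow> k \<le> N \<Longrightarrow> uvec enum i \<bullet> uvec enum k = (if i = k then 1 else 0)"
  using inj unfolding uvec_def by (auto simp: inner_axis_axis inj_on_def)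

lemma gx: assumes "i \<le> N+1" "j \<le> N+1"
  shows "gpt N L \<zeta> enum i \<bullet> xpt \<zeta> enum j = (if i < j then -L*(\<zeta> i - \<zeta> (j+1)) else 0)"
proof (cases "i \<le> N")
  case False thus ?thesis using assms by (simp add: gpt_def)
next
  case True
  define s where "s = sqrt (\<zeta> i - \<zeta> (i+1))"
  have s: "s > 0" using spos[of i] True by (simp add: s_def)
  have "gpt N L \<zeta> enum i \<bullet> xpt \<zeta> enum j =
      - (L * s) * (\<Sum>k<j. ((\<zeta> k - \<zeta> (j+1)) / sqrt (\<zeta> k - \<zeta> (k+1))) * (uvec enum i \<bullet> uvec enum k))"
    using True by (simp add: gpt_def xpt_def s_def inner_sum_right sum_distrib_left sum_negf mult_ac)
  also have "(\<Sum>k<j. ((\<zeta> k - \<zeta> (j+1)) / sqrt (\<zeta> k - \<zeta> (k+1))) * (uvec enum i \<bullet> uvec enum k))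
     = (\<Sum>k<j. if k = i then (\<zeta> i - \<zeta> (j+1)) / s else 0)"
    using True assms by (intro sum.cong) (auto simp: uu s_def)
  also have "\<dots> = (if i < j then (\<zeta> i - \<zeta> (j+1)) / s else 0)"
    by (simp add: sum.delta')
  finally show ?thesis using s by auto
qed

lemma gg: assumes "i \<le> N+1" "j \<le> N+1"
  shows "gpt N L \<zeta> enum i \<bullet> gpt N L \<zeta> enum j = (if i = j \<and> i \<le> N then L^2*(\<zeta> i - \<zeta> (i+1)) else 0)"
  using assms spos[of i] by (auto simp: gpt_def uu power2_eq_square)

lemma gnu: assumes "\<forall>k. 0 \<le> \<nu> $ k" shows "0 \<le> gpt N L \<zeta> enum i \<bullet> \<nu>"
proof (cases "i \<le> N")
  case True
  have "0 \<le> \<zeta> i - \<zeta> (i+1)" using spos[of i] True by simp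
  hence "0 \<le> L * sqrt (\<zeta> i - \<zeta> (i+1)) * \<nu> $ enum i" using L assms by simp
  thus ?thesis using True by (simp add: gpt_def uvec_def inner_axis')
qed (simp add: gpt_def)

lemma Q: assumes i: "i \<le> N+1" and j: "j \<le> N+1"
  shows "gpt N L \<zeta> enum i \<bullet> (zp N L \<zeta> enum j - zp N L \<zeta> enum i) \<le> bp N L \<zeta> enum j - bp N L \<zeta> enum i"
proof -
  have e: "gpt N L \<zeta> enum i \<bullet> (zp N L \<zeta> enum j - zp N L \<zeta> enum i) - (bp N L \<zeta> enum j - bp N L \<zeta> enum i)
     = gpt N L \<zeta> enum i \<bullet> xpt \<zeta> enum j - gpt N L \<zeta> enum i \<bullet> xpt \<zeta> enum i
       - (gpt N L \<zeta> enum i \<bullet> gpt N L \<zeta> enum j - gpt N L \<zeta> enum i \<bullet> gpt N L \<zeta> enum i) / L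
       - fval N L \<zeta> j + fval N L \<zeta> i
       + (gpt N L \<zeta> enum j \<bullet> gpt N L \<zeta> enum j - gpt N L \<zeta> enum i \<bullet> gpt N L \<zeta> enum i) / (2*L)"
    by (simp add: zp_def bp_def inner_diff_right power2_norm_eq_inner algebra_simps diff_divide_distrib)
  have "gpt N L \<zeta> enum i \<bullet> (zp N L \<zeta> enum j - zp N L \<zeta> enum i) - (bp N L \<zeta> enum j - bp N L \<zeta> enum i) \<le> 0"
  proof -
    have a1: "\<zeta> i \<le> \<zeta> (j+1)" if "j < i" using anti[of "j+1" i] that i by simp
    have a2: "0 \<le> \<zeta> (j+1)" using anti[of "j+1" "N+2"] z0 j by simp
    have a3: "\<zeta> (j+1) = 0" if "j = N+1" using z0 that by simp
    have a4: "0 < \<zeta> i - \<zeta> (i+1)" "0 < \<zeta> j - \<zeta> (j+1)" using spos i j by auto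
    show ?thesis unfolding e gx[OF i j] gx[OF i i] gg[OF i j] gg[OF i i] gg[OF j j]
      using a1 a2 a3 a4 L i j
      by (cases "i < j"; cases "i = j"; cases "i \<le> N"; cases "j \<le> N")
         (auto simp: fval_def field_simps power2_eq_square)
  qed
  thus ?thesis by simp
qed

definition pt :: "nat \<Rightarrow> (real^'n) \<times> (nat \<Rightarrow> real)" where
  "pt i = (0, \<lambda>j. if j = i then 1 else 0)"

lemma pt_props: assumes i: "i \<le> N+1"
  shows "pt i \<in> PP N" "MM N L \<zeta> enum (pt i) = zp N L \<zeta> enum i" "BB N L \<zeta> enum (pt i) = bp N L \<zeta> enum i"
proof -
  show "pt i \<in> PP N" using i by (auto simp: pt_def PP_def simp del: sum.atMost_Suc)
  have "(\<Sum>j\<le>N+1. (if j = i then 1 else 0) *\<^sub>R zp N L \<zeta> enum j) = (\<Sum>j\<le>N+1. if j = i then zp N L \<zeta> enum j else 0)"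
    by (rule sum.cong) auto
  also have "\<dots> = zp N L \<zeta> enum i" using i by (simp del: sum.atMost_Suc)
  finally show "MM N L \<zeta> enum (pt i) = zp N L \<zeta> enum i" by (simp add: MM_def pt_def del: sum.atMost_Suc)
  have "(\<Sum>j\<le>N+1. (if j = i then 1 else 0) * bp N L \<zeta> enum j) = (\<Sum>j\<le>N+1. if j = i then bp N L \<zeta> enum j else 0)"
    by (rule sum.cong) auto
  also have "\<dots> = bp N L \<zeta> enum i" using i by (simp del: sum.atMost_Suc)
  finally show "BB N L \<zeta> enum (pt i) = bp N L \<zeta> enum i" by (simp add: BB_def pt_def del: sum.atMost_Suc)
qed

lemma vi_pt: assumes i: "i \<le> N+1" and q: "q \<in> PP N"
  shows "L * ((xpt \<zeta> enum i - MM N L \<zeta> enum (pt i)) \<bullet> (MM N L \<zeta> enum q - MM N L \<zeta> enum (pt i)))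
     \<le> BB N L \<zeta> enum q - BB N L \<zeta> enum (pt i)"
proof -
  obtain \<nu> \<alpha> where qq: "q = (\<nu>, \<alpha>)" by (cases q)
  have nu: "\<forall>k. 0 \<le> \<nu> $ k" and al: "\<forall>j\<le>N+1. 0 \<le> \<alpha> j" and s1: "sum \<alpha> {..N+1} = 1"
    using q by (auto simp: qq PP_def simp del: sum.atMost_Suc)
  define g where "g = gpt N L \<zeta> enum i"
  define z where "z = zp N L \<zeta> enum"
  define b where "b = bp N L \<zeta> enum"
  have xz: "xpt \<zeta> enum i - z i = (1/L) *\<^sub>R g" by (simp add: z_def zp_def g_def)
  have zi: "z i = (\<Sum>j\<le>N+1. \<alpha> j *\<^sub>R z i)" by (simp only: scaleR_sum_left[symmetric] s1 scaleR_one)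
  have bi: "b i = (\<Sum>j\<le>N+1. \<alpha> j * b i)" by (simp only: sum_distrib_right[symmetric] s1 mult_1)
  have Mq: "MM N L \<zeta> enum q - z i = (\<Sum>j\<le>N+1. \<alpha> j *\<^sub>R (z j - z i)) - \<nu>"
    unfolding MM_def qq z_def[symmetric]
    by (subst zi) (simp add: sum_subtractf scaleR_diff_right algebra_simps del: sum.atMost_Suc)
  have Bq: "BB N L \<zeta> enum q - b i = (\<Sum>j\<le>N+1. \<alpha> j * (b j - b i))"
    unfolding BB_def qq b_def[symmetric]
    by (subst bi) (simp add: sum_subtractf right_diff_distrib del: sum.atMost_Suc)
  have "L * ((xpt \<zeta> enum i - MM N L \<zeta> enum (pt i)) \<bullet> (MM N L \<zeta> enum q - MM N L \<zeta> enum (pt i)))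
      = g \<bullet> (MM N L \<zeta> enum q - z i)"
    using L by (simp add: pt_props[OF i] z_def[symmetric] xz)
  also have "\<dots> = (\<Sum>j\<le>N+1. \<alpha> j * (g \<bullet> (z j - z i))) - g \<bullet> \<nu>"
    unfolding Mq by (simp add: inner_diff_right inner_sum_right del: sum.atMost_Suc)
  also have "\<dots> \<le> (\<Sum>j\<le>N+1. \<alpha> j * (b j - b i))"
  proof -
    have "(\<Sum>j\<le>N+1. \<alpha> j * (g \<bullet> (z j - z i))) \<le> (\<Sum>j\<le>N+1. \<alpha> j * (b j - b i))"
      using al Q[OF i] by (intro sum_mono mult_left_mono) (auto simp: g_def z_def b_def)
    moreover have "0 \<le> g \<bullet> \<nu>" unfolding g_def by (rule gnu[OF nu])
    ultimately show ?thesis by simp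
  qed
  also have "\<dots> = BB N L \<zeta> enum q - BB N L \<zeta> enum (pt i)"
    using Bq pt_props[OF i] by (simp add: b_def)
  finally show ?thesis .
qed

lemma MM_cong: assumes "\<And>i. i \<le> N+1 \<Longrightarrow> \<alpha> i = \<beta> i" shows "MM N L \<zeta> enum (\<nu>, \<alpha>) = MM N L \<zeta> enum (\<nu>, \<beta>)"
proof -
  have "(\<Sum>i\<le>N+1. \<alpha> i *\<^sub>R zp N L \<zeta> enum i) = (\<Sum>i\<le>N+1. \<beta> i *\<^sub>R zp N L \<zeta> enum i)"
    by (rule sum.cong) (auto simp: assms)
  thus ?thesis unfolding MM_def by simp
qed

lemma BB_cong: assumes "\<And>i. i \<le> N+1 \<Longrightarrow> \<alpha> i = \<beta> i" shows "BB N L \<zeta> enum (\<nu>, \<alpha>) = BB N L \<zeta> enum (\<nu>, \<beta>)"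
proof -
  have "(\<Sum>i\<le>N+1. \<alpha> i * bp N L \<zeta> enum i) = (\<Sum>i\<le>N+1. \<beta> i * bp N L \<zeta> enum i)"
    by (rule sum.cong) (auto simp: assms)
  thus ?thesis unfolding BB_def by simp
qed

definition af :: "real^'n \<Rightarrow> real \<Rightarrow> nat \<Rightarrow> real" where
  "af a t i = (if i \<le> N then a $ enum i else if i = N+1 then t else 0)"

lemma sumN: "(\<Sum>i\<le>N. h (enum i)) = (\<Sum>k\<in>UNIV. h k)"
  using sum.reindex_bij_betw[OF bij, of h] by simp

lemma S1: "sum (af a t) {..N+1} = (\<Sum>k\<in>UNIV. a $ k) + t"
proof -
  have "(\<Sum>i\<le>N. af a t i) = (\<Sum>i\<le>N. a $ enum i)" by (rule sum.cong) (auto simp: af_def)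
  hence "sum (af a t) {..N+1} = (\<Sum>i\<le>N. a $ enum i) + t"
    by (simp add: af_def)
  thus ?thesis using sumN[of "\<lambda>k. a $ k"] by simp
qed

lemma S2: "(\<Sum>i\<le>N+1. af a t i *\<^sub>R v i) = (\<Sum>i\<le>N. (a $ enum i) *\<^sub>R v i) + t *\<^sub>R v (N+1)"
proof -
  have "(\<Sum>i\<le>N. af a t i *\<^sub>R v i) = (\<Sum>i\<le>N. (a $ enum i) *\<^sub>R v i)" by (rule sum.cong) (auto simp: af_def)
  thus ?thesis by (simp add: af_def)
qed

lemma S3: "(\<Sum>i\<le>N+1. af a t i * v i) = (\<Sum>i\<le>N. (a $ enum i) * v i) + t * v (N+1)"
proof -
  have "(\<Sum>i\<le>N. af a t i * v i) = (\<Sum>i\<le>N. (a $ enum i) * v i)" by (rule sum.cong) (auto simp: af_def)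
  thus ?thesis by (simp add: af_def)
qed

lemma attain: "\<exists>p\<in>PP N. \<forall>q\<in>PP N. wa L (MM N L \<zeta> enum) (BB N L \<zeta> enum) y p \<le> wa L (MM N L \<zeta> enum) (BB N L \<zeta> enum) y q"
proof -
  define z where "z = zp N L \<zeta> enum"
  define b where "b = bp N L \<zeta> enum"
  define W where "W = wa L (MM N L \<zeta> enum) (BB N L \<zeta> enum) y"
  define B where "B = (\<Sum>i\<le>N+1. norm (z i)) + norm y"
  define \<phi> :: "(real^'n) \<times> ((real^'n) \<times> real) \<Rightarrow> (real^'n) \<times> (nat \<Rightarrow> real)" where
    "\<phi> e = (fst e, af (fst (snd e)) (snd (snd e)))" for e
  define K :: "((real^'n) \<times> ((real^'n) \<times> real)) set" where
    "K = {e. norm (fst e) \<le> B \<and> (\<forall>k. 0 \<le> fst e $ k) \<and> (\<forall>k. 0 \<le> fst (snd e) $ k) \<and> 0 \<le> snd (snd e)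
          \<and> (\<Sum>k\<in>UNIV. fst (snd e) $ k) + snd (snd e) = 1}"
  have B0: "0 \<le> B" by (simp add: B_def sum_nonneg)
  have Feq: "W (\<phi> e) = L/2 * (norm (y - ((\<Sum>i\<le>N. (fst (snd e) $ enum i) *\<^sub>R z i) + snd (snd e) *\<^sub>R z (N+1) - fst e)))^2
       + ((\<Sum>i\<le>N. (fst (snd e) $ enum i) * b i) + snd (snd e) * b (N+1))" for e
    unfolding W_def wa_def \<phi>_def MM_def BB_def z_def[symmetric] b_def[symmetric]
    by (simp only: fst_conv snd_conv S2 S3)
  have cont: "continuous_on K (\<lambda>e. W (\<phi> e))"
    unfolding Feq by (intro continuous_intros)
  have closedK: "closed K"
    unfolding K_def
    by (intro closed_Collect_conj closed_Collect_all closed_Collect_le closed_Collect_eq continuous_intros)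
  have boundedK: "bounded K"
    unfolding bounded_iff
  proof (intro exI ballI)
    fix e assume e: "e \<in> K"
    obtain \<nu> a t where ee: "e = (\<nu>, a, t)" by (cases e) auto
    have a0: "\<forall>k. 0 \<le> a $ k" and t0: "0 \<le> t" and st: "(\<Sum>k\<in>UNIV. a $ k) + t = 1" and nB: "norm \<nu> \<le> B"
      using e by (auto simp: K_def ee)
    have "norm a \<le> (\<Sum>k\<in>UNIV. \<bar>a $ k\<bar>)" by (rule norm_le_l1_cart)
    also have "\<dots> = (\<Sum>k\<in>UNIV. a $ k)" using a0 by simp
    also have "\<dots> \<le> 1" using st t0 by simp
    finally have na: "norm a \<le> 1" .
    have nt: "norm t \<le> 1" using st t0 a0 by (simp add: sum_nonneg) (smt (verit) sum_nonneg)
    have "norm e \<le> norm \<nu> + norm (a, t)" unfolding ee by (rule norm_Pair_le)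
    also have "norm (a, t) \<le> norm a + norm t" by (rule norm_Pair_le)
    finally show "norm e \<le> B + 2" using na nt nB by simp
  qed
  have compK: "compact K" using closedK boundedK by (simp add: compact_eq_bounded_closed)
  have neK: "(0, 0, 1) \<in> K" using B0 by (simp add: K_def)
  obtain es where es: "es \<in> K" "\<And>e. e \<in> K \<Longrightarrow> W (\<phi> es) \<le> W (\<phi> e)"
  proof -
    have "\<exists>x\<in>K. \<forall>y\<in>K. W (\<phi> x) \<le> W (\<phi> y)" using continuous_attains_inf[OF compK _ cont] neK by blast
    thus ?thesis using that by blast
  qed
  have afnn: "\<forall>i\<le>N+1. 0 \<le> af a t i" if "\<forall>k. 0 \<le> a $ k" "0 \<le> t" for a t
    using that by (simp add: af_def)
  have PPes: "\<phi> es \<in> PP N"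
    using es(1) afnn S1 by (auto simp: K_def PP_def \<phi>_def simp del: sum.atMost_Suc)
  show ?thesis unfolding W_def[symmetric]
  proof (intro bexI[OF _ PPes] ballI)
    fix q :: "(real^'n) \<times> (nat \<Rightarrow> real)" assume q: "q \<in> PP N"
    obtain \<nu> \<alpha> where qq: "q = (\<nu>, \<alpha>)" by (cases q)
    have nu: "\<forall>k. 0 \<le> \<nu> $ k" and al: "\<forall>j\<le>N+1. 0 \<le> \<alpha> j" and s1: "sum \<alpha> {..N+1} = 1"
      using q by (auto simp: qq PP_def simp del: sum.atMost_Suc)
    define c where "c = (\<Sum>i\<le>N+1. \<alpha> i *\<^sub>R z i)"
    define \<nu>' :: "real^'n" where "\<nu>' = (\<chi> k. max 0 (c $ k - y $ k))"
    define a :: "real^'n" where "a = (\<chi> k. \<alpha> (inv_into {..N} enum k))"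
    define t where "t = \<alpha> (N+1)"
    have afa: "af a t i = \<alpha> i" if "i \<le> N+1" for i
    proof (cases "i \<le> N")
      case False hence "i = N+1" using that by simp
      thus ?thesis by (simp add: af_def t_def)
    next
      case True
      hence "inv_into {..N} enum (enum i) = i" using inj by (simp add: inv_into_f_f)
      thus ?thesis using True by (simp add: af_def a_def)
    qed
    have Meq: "MM N L \<zeta> enum (\<phi> (\<nu>', a, t)) = MM N L \<zeta> enum (\<nu>', \<alpha>)"
      unfolding \<phi>_def fst_conv snd_conv by (rule MM_cong) (rule afa)
    have Beq: "BB N L \<zeta> enum (\<phi> (\<nu>', a, t)) = BB N L \<zeta> enum (\<nu>', \<alpha>)"
      unfolding \<phi>_def fst_conv snd_conv by (rule BB_cong) (rule afa)
    have ale1: "\<alpha> i \<le> 1" if "i \<le> N+1" for i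
    proof -
      have "\<alpha> i \<le> sum \<alpha> {..N+1}" using al that by (intro member_le_sum) auto
      thus ?thesis using s1 by simp
    qed
    have nc: "norm c \<le> (\<Sum>i\<le>N+1. norm (z i))"
    proof -
      have "norm c \<le> (\<Sum>i\<le>N+1. norm (\<alpha> i *\<^sub>R z i))" unfolding c_def by (rule norm_sum)
      also have "\<dots> \<le> (\<Sum>i\<le>N+1. norm (z i))"
      proof (rule sum_mono)
        fix i assume "i \<in> {..N+1}"
        hence "0 \<le> \<alpha> i" "\<alpha> i \<le> 1" using al ale1 by auto
        thus "norm (\<alpha> i *\<^sub>R z i) \<le> norm (z i)"
          by (simp add: mult_left_le_one_le)
      qed
      finally show ?thesis .
    qed
    have nnu: "norm \<nu>' \<le> B"
    proof -
      have "norm \<nu>' \<le> norm (c - y)"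
        by (rule norm_le_componentwise_cart) (auto simp: \<nu>'_def)
      also have "\<dots> \<le> norm c + norm y" by (rule norm_triangle_ineq4)
      finally show ?thesis using nc by (simp add: B_def)
    qed
    have inK: "(\<nu>', a, t) \<in> K"
    proof -
      have a0: "\<forall>k. 0 \<le> a $ k"
      proof
        fix k
        have "k \<in> enum ` {..N}" using bij by (simp add: bij_betw_def)
        hence "inv_into {..N} enum k \<in> {..N}" by (rule inv_into_into)
        thus "0 \<le> a $ k" using al by (auto simp: a_def)
      qed
      have "(\<Sum>k\<in>UNIV. a $ k) + t = sum (af a t) {..N+1}" by (simp only: S1)
      also have "\<dots> = sum \<alpha> {..N+1}" using afa by (intro sum.cong) auto
      finally have "(\<Sum>k\<in>UNIV. a $ k) + t = 1" using s1 by simp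
      thus ?thesis using a0 nnu al by (auto simp: K_def \<nu>'_def t_def)
    qed
    have le1: "W (\<nu>', \<alpha>) \<le> W q"
    proof -
      have M1: "MM N L \<zeta> enum (\<nu>', \<alpha>) = c - \<nu>'" and M2: "MM N L \<zeta> enum q = c - \<nu>"
        by (simp_all add: MM_def c_def z_def qq)
      have B1: "BB N L \<zeta> enum (\<nu>', \<alpha>) = BB N L \<zeta> enum q" by (simp add: BB_def qq)
      have "(norm (y - (c - \<nu>')))^2 \<le> (norm (y - (c - \<nu>)))^2"
        unfolding power2_norm_eq_inner inner_vec_def
      proof (rule sum_mono)
        fix k
        have "(y $ k - c $ k + \<nu>' $ k)^2 \<le> (y $ k - c $ k + \<nu> $ k)^2"
        proof (cases "c $ k - y $ k \<le> 0")
          case True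
          hence "\<nu>' $ k = 0" by (simp add: \<nu>'_def)
          thus ?thesis using True nu by (intro power_mono) auto
        next
          case False
          hence "\<nu>' $ k = c $ k - y $ k" by (simp add: \<nu>'_def)
          thus ?thesis by simp
        qed
        thus "(y - (c - \<nu>')) $ k \<bullet> (y - (c - \<nu>')) $ k \<le> (y - (c - \<nu>)) $ k \<bullet> (y - (c - \<nu>)) $ k"
          by (simp add: power2_eq_square algebra_simps)
      qed
      thus ?thesis using L unfolding W_def wa_def M1 M2 B1 by simp
    qed
    have "W (\<phi> es) \<le> W (\<phi> (\<nu>', a, t))" by (rule es(2)[OF inK])
    also have "W (\<phi> (\<nu>', a, t)) = W (\<nu>', \<alpha>)" unfolding W_def wa_def Meq Beq ..
    finally show "W (\<phi> es) \<le> W q" using le1 by simp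
  qed
qed

end

theorem corollary1:
  fixes N :: nat and L :: real and \<zeta> :: "nat \<Rightarrow> real" and enum :: "nat \<Rightarrow> 'n::finite"
  assumes "N > 0" and "L > 0"
    and "bij_betw enum {..N} (UNIV :: 'n set)"
    and "\<forall>i\<le>N+1. \<zeta> (i+1) < \<zeta> i" and "\<zeta> (N+2) = 0"
  shows "convex_on UNIV (Wfun N L \<zeta> enum)
    \<and> (\<exists>G :: real^'n \<Rightarrow> real^'n.
         (\<forall>y. GDERIV (Wfun N L \<zeta> enum) y :> G y)
       \<and> L-lipschitz_on UNIV G
       \<and> (\<forall>i\<le>N+1. Wfun N L \<zeta> enum (xpt \<zeta> enum i) = fval N L \<zeta> i
                   \<and> G (xpt \<zeta> enum i) = gpt N L \<zeta> enum i))"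
proof -
  note L = assms(2) and bij = assms(3) and mono = assms(4) and z0 = assms(5)
  have main: "convex_on UNIV (Wfun N L \<zeta> enum) \<and> (\<exists>G.
         (\<forall>y. GDERIV (Wfun N L \<zeta> enum) y :> G y) \<and> L-lipschitz_on UNIV G
       \<and> (\<forall>y p. p \<in> PP N \<and> (\<forall>q\<in>PP N. L * ((y - MM N L \<zeta> enum p) \<bullet> (MM N L \<zeta> enum q - MM N L \<zeta> enum p)) \<le> BB N L \<zeta> enum q - BB N L \<zeta> enum p)
             \<longrightarrow> Wfun N L \<zeta> enum y = wa L (MM N L \<zeta> enum) (BB N L \<zeta> enum) y p \<and> G y = L *\<^sub>R (y - MM N L \<zeta> enum p)))"
    by (rule abstract_main[OF L conv_PP attain[OF L bij mono z0] Wfun_eq])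
  then obtain G where cvx: "convex_on UNIV (Wfun N L \<zeta> enum)"
    and der: "\<forall>y. GDERIV (Wfun N L \<zeta> enum) y :> G y" and lip: "L-lipschitz_on UNIV G"
    and interp: "\<And>y p. p \<in> PP N \<Longrightarrow> (\<forall>q\<in>PP N. L * ((y - MM N L \<zeta> enum p) \<bullet> (MM N L \<zeta> enum q - MM N L \<zeta> enum p)) \<le> BB N L \<zeta> enum q - BB N L \<zeta> enum p)
             \<Longrightarrow> Wfun N L \<zeta> enum y = wa L (MM N L \<zeta> enum) (BB N L \<zeta> enum) y p \<and> G y = L *\<^sub>R (y - MM N L \<zeta> enum p)"
    by blast
  have pts: "Wfun N L \<zeta> enum (xpt \<zeta> enum i) = fval N L \<zeta> i \<and> G (xpt \<zeta> enum i) = gpt N L \<zeta> enum i"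
    if i: "i \<le> N+1" for i
  proof -
    note pp = pt_props[OF L bij mono z0 i]
    have I: "Wfun N L \<zeta> enum (xpt \<zeta> enum i) = wa L (MM N L \<zeta> enum) (BB N L \<zeta> enum) (xpt \<zeta> enum i) (pt i)
        \<and> G (xpt \<zeta> enum i) = L *\<^sub>R (xpt \<zeta> enum i - MM N L \<zeta> enum (pt i))"
      by (rule interp[OF pp(1)]) (use vi_pt[OF L bij mono z0 i] in blast)
    have xz: "xpt \<zeta> enum i - MM N L \<zeta> enum (pt i) = (1/L) *\<^sub>R gpt N L \<zeta> enum i"
      by (simp add: pp zp_def)
    have "wa L (MM N L \<zeta> enum) (BB N L \<zeta> enum) (xpt \<zeta> enum i) (pt i) = fval N L \<zeta> i"
      unfolding wa_def xz pp(3) bp_def using L by (simp add: power2_eq_square field_simps)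
    moreover have "L *\<^sub>R (xpt \<zeta> enum i - MM N L \<zeta> enum (pt i)) = gpt N L \<zeta> enum i"
      unfolding xz using L by simp
    ultimately show ?thesis using I by simp
  qed
  show ?thesis using cvx der lip pts by blast
qed

end
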